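(* Let $n\ge 2$ and let $Q\in\mathbb{R}^{n\times n}$ be an irreducible generator matrix of a continuous-time Markov chain ($q_{ij}\ge0$ for $i\ne j$, $q_{ii}=-\sum_{j\ne i}q_{ij}$). Let $B=\operatorname{diag}(\beta_i)$ with $\beta_i>0$ and $D=\operatorname{diag}(\delta_i)$ with $\delta_i\ge 0$. Let $(\boldsymbol p(t),\boldsymbol x(t))$ solve \[ \dot{\boldsymbol p}=(B-D-L(\boldsymbol x))\boldsymbol p-\operatorname{diag}(\boldsymbol p)B\boldsymbol p,\qquad \dot{\boldsymbol x}=Q^\top\boldsymbol x, \] with $\boldsymbol p(0)\in[0,1]^n$ and $\boldsymbol x(0)$ having entries in $(0,1)$ summing to $1$, where $L(\boldsymbol x)$ has entries $l_{ii}(\boldsymbol x)=\sum_{j\ne i}q_{ji}\frac{x_j}{x_i}$ and $l_{ij}(\boldsymbol x)=-q_{ji}\frac{x_j}{x_i}$ for $i\ne j$. If $p_i(t)\to 0$ as $t\to\infty$ for some $i\in\{1,\dots,n\}$, then $\boldsymbol p(t)\to\boldsymbol 0$ as $t\to\infty$. *)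

theory Defs
  imports "HOL-Analysis.Analysis"
begin

definition generator_matrix :: "real^'n^'n \<Rightarrow> bool" where
  "generator_matrix Q \<longleftrightarrow>
     (\<forall>i j. i \<noteq> j \<longrightarrow> Q $ i $ j \<ge> 0) \<and>
     (\<forall>i. Q $ i $ i = - (\<Sum>j\<in>UNIV - {i}. Q $ i $ j))"

definition irreducible_matrix :: "real^'n^'n \<Rightarrow> bool" where
  "irreducible_matrix Q \<longleftrightarrow>
     (\<forall>i j. i \<noteq> j \<longrightarrow> (i, j) \<in> {(a, b). a \<noteq> b \<and> Q $ a $ b \<noteq> 0}\<^sup>+)"

definition diag_mat :: "real^'n \<Rightarrow> real^'n^'n" where
  "diag_mat v = (\<chi> i j. if i = j then v $ i else 0)"

definition L_mat :: "real^'n^'n \<Rightarrow> real^'n \<Rightarrow> real^'n^'n" where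
  "L_mat Q x = (\<chi> i j. if i = j then (\<Sum>k\<in>UNIV - {i}. Q $ k $ i * x $ k / x $ i)
                         else - (Q $ j $ i * x $ j / x $ i))"

end

theory Submission
  imports Defs
begin

lemma comp_deriv:
  fixes f :: "real \<Rightarrow> real^'n"
  assumes "(f has_vector_derivative v) F"
  shows "((\<lambda>t. f t $ i) has_real_derivative v $ i) F"
  using bounded_linear.has_vector_derivative[OF bounded_linear_vec_nth assms]
  by (simp add: has_real_derivative_iff_has_vector_derivative)

lemma at_pos: "(0::real) < t \<Longrightarrow> at t within {0..} = at t"
  by (rule at_within_open_subset[where S="{0<..}"]) auto

lemma cont_on_from_deriv:
  fixes f :: "real \<Rightarrow> real"
  assumes "\<forall>t\<ge>0. (f has_real_derivative f' t) (at t within {0..})"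
  shows "continuous_on {0..} f"
  using assms by (metis atLeast_iff continuous_on_eq_continuous_within DERIV_continuous)

lemma mvt_ge:
  fixes f :: "real \<Rightarrow> real"
  assumes d: "\<forall>t\<ge>0. (f has_real_derivative f' t) (at t within {0..})"
    and ab: "0 \<le> a" "a \<le> b" and K: "\<forall>t. a < t \<and> t < b \<longrightarrow> K \<le> f' t"
  shows "K * (b - a) \<le> f b - f a"
proof (cases "a = b")
  case True then show ?thesis by simp
next
  case False
  then have lt: "a < b" using ab by simp
  have c: "continuous_on {a..b} f"
    by (rule continuous_on_subset[OF cont_on_from_deriv[OF d]]) (use ab in auto)
  have "\<exists>l z. a < z \<and> z < b \<and> DERIV f z :> l \<and> f b - f a = (b - a) * l"
  proof (rule MVT[OF lt c])
    fix x assume "a < x" "x < b"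
    then show "f differentiable (at x)"
      using d ab at_pos[of x] by (metis less_eq_real_def order_le_less_trans real_differentiable_def)
  qed
  then obtain l z where z: "a < z" "z < b" "DERIV f z :> l" "f b - f a = (b - a) * l" by blast
  have "DERIV f z :> f' z" using d z ab at_pos[of z] by (metis less_eq_real_def order_le_less_trans)
  then have "l = f' z" using z(3) DERIV_unique by blast
  then show ?thesis using z K lt by (simp add: mult.commute mult_right_mono)
qed

lemma mvt_le:
  fixes f :: "real \<Rightarrow> real"
  assumes d: "\<forall>t\<ge>0. (f has_real_derivative f' t) (at t within {0..})"
    and ab: "0 \<le> a" "a \<le> b" and K: "\<forall>t. a < t \<and> t < b \<longrightarrow> f' t \<le> K"
  shows "f b - f a \<le> K * (b - a)"
proof -
  have d2: "\<forall>t\<ge>0. ((\<lambda>t. - f t) has_real_derivative - f' t) (at t within {0..})"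
    using d by (auto intro: derivative_intros)
  have "(-K) * (b - a) \<le> (- f b) - (- f a)"
    by (rule mvt_ge[OF d2 ab]) (use K in auto)
  then show ?thesis by simp
qed

lemma first_zero:
  fixes f f' :: "'i::finite \<Rightarrow> real \<Rightarrow> real"
  assumes d: "\<forall>i t. 0 \<le> t \<longrightarrow> (f i has_real_derivative f' i t) (at t within {0..})"
    and pos0: "\<forall>i. f i 0 > 0"
    and cond: "\<forall>i t. 0 < t \<longrightarrow> t \<le> T \<longrightarrow> (\<forall>j. f j t \<ge> 0) \<longrightarrow> f i t = 0 \<longrightarrow> f' i t > 0"
  shows "\<forall>i t. 0 \<le> t \<longrightarrow> t \<le> T \<longrightarrow> f i t > 0"
proof (rule ccontr)
  assume neg: "\<not> (\<forall>i t. 0 \<le> t \<longrightarrow> t \<le> T \<longrightarrow> f i t > 0)"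
  define S where "S = (\<Union>i. {0..T} \<inter> f i -` {..0})"
  have Sne: "S \<noteq> {}" proof -
    obtain i t where "0 \<le> t" "t \<le> T" "f i t \<le> 0" using neg by (auto simp: not_less)
    then have "t \<in> S" unfolding S_def by auto
    then show ?thesis by auto
  qed
  have cont: "\<And>i. continuous_on {0..T} (f i)"
    using cont_on_from_deriv[of "f i" "f' i" for i] d
    by (meson atLeastAtMost_iff atLeast_iff continuous_on_subset subsetI)
  have "closed S" unfolding S_def
    by (intro closed_Union finite_imageI) (auto intro!: continuous_closed_preimage cont)
  moreover have bb: "bdd_below S" unfolding S_def by (auto intro!: bdd_belowI[of _ 0])
  ultimately have "Inf S \<in> S" using closed_contains_Inf Sne by blast
  define \<tau> where "\<tau> = Inf S"
  obtain i where i: "0 \<le> \<tau>" "\<tau> \<le> T" "f i \<tau> \<le> 0" using \<open>Inf S \<in> S\<close> unfolding S_def \<tau>_def by auto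
  have before: "f j s > 0" if "0 \<le> s" "s < \<tau>" for j s
  proof (rule ccontr)
    assume "\<not> f j s > 0"
    then have "s \<in> S" using that i unfolding S_def by (auto simp: not_less)
    then have "\<tau> \<le> s" unfolding \<tau>_def using bb by (rule cInf_lower)
    then show False using that by simp
  qed
  have tpos: "\<tau> > 0" using i pos0 by (metis less_eq_real_def not_le)
  have D: "DERIV (f j) \<tau> :> f' j \<tau>" for j using d i tpos at_pos[of \<tau>] by metis
  have nn: "f j \<tau> \<ge> 0" for j
  proof -
    have "(f j \<longlongrightarrow> f j \<tau>) (at_left \<tau>)"
      using DERIV_isCont[OF D, of j] unfolding isCont_def by (rule tendsto_mono[OF at_le, rotated]) simp
    moreover have "\<forall>\<^sub>F s in at_left \<tau>. 0 \<le> f j s"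
      unfolding eventually_at_left_field using tpos before
      by (intro exI[of _ 0]) (auto intro: less_imp_le)
    ultimately show ?thesis by (rule tendsto_lowerbound) simp
  qed
  then have "f i \<tau> = 0" using i by (meson order_antisym)
  then have "f' i \<tau> > 0" using cond tpos i nn by blast
  then obtain e where e: "e > 0" "\<forall>h>0. h < e \<longrightarrow> f i (\<tau> - h) < f i \<tau>"
    using DERIV_pos_inc_left[OF D] by blast
  define h where "h = min (e/2) (\<tau>/2)"
  have "f i (\<tau> - h) < 0" using e \<open>f i \<tau> = 0\<close> tpos unfolding h_def by auto
  moreover have "f i (\<tau> - h) > 0" using before[of "\<tau> - h" i] tpos e unfolding h_def by auto
  ultimately show False by simp
qed

lemma diag_mv: "(diag_mat v *v p) $ i = v $ i * p $ i"
  unfolding diag_mat_def matrix_vector_mult_def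
  by (simp add: if_distrib[of "\<lambda>a. a * _"] cong: if_cong)

lemma diag_mm: "diag_mat a ** diag_mat b = diag_mat (\<chi> i. a $ i * b $ i)"
  unfolding diag_mat_def matrix_matrix_mult_def
  by (rule vec_eq_iff[THEN iffD2], auto simp: vec_eq_iff if_distrib[of "\<lambda>a. a * _"] cong: if_cong)

lemma L_mv: "(L_mat Q x *v p) $ i = (\<Sum>k\<in>UNIV - {i}. Q $ k $ i * x $ k / x $ i) * p $ i
      - (\<Sum>j\<in>UNIV - {i}. Q $ j $ i * x $ j / x $ i * p $ j)"
proof -
  have "(L_mat Q x *v p) $ i = (\<Sum>j\<in>UNIV. L_mat Q x $ i $ j * p $ j)"
    by (simp add: matrix_vector_mult_def)
  also have "\<dots> = L_mat Q x $ i $ i * p $ i + (\<Sum>j\<in>UNIV - {i}. L_mat Q x $ i $ j * p $ j)"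
    by (simp add: sum.remove)
  also have "(\<Sum>j\<in>UNIV - {i}. L_mat Q x $ i $ j * p $ j) = - (\<Sum>j\<in>UNIV - {i}. Q $ j $ i * x $ j / x $ i * p $ j)"
    by (simp add: L_mat_def sum_negf[symmetric])
  finally show ?thesis by (simp add: L_mat_def)
qed

lemma rhs_comp: "((diag_mat \<beta> - diag_mat \<delta> - L_mat Q x) *v p - (diag_mat p ** diag_mat \<beta>) *v p) $ i
  = (\<beta>$i - \<delta>$i - \<beta>$i * p$i) * p$i + (\<Sum>j\<in>UNIV-{i}. Q$j$i * x$j / x$i * (p$j - p$i))"
proof -
  have e: "(\<Sum>j\<in>UNIV-{i}. Q$j$i * x$j / x$i * (p$j - p$i)) = (\<Sum>j\<in>UNIV - {i}. Q $ j $ i * x $ j / x $ i * p $ j) - (\<Sum>k\<in>UNIV - {i}. Q $ k $ i * x $ k / x $ i) * p $ i"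
    by (simp add: sum_subtractf[symmetric] sum_distrib_right right_diff_distrib)
  have "((diag_mat \<beta> - diag_mat \<delta> - L_mat Q x) *v p - (diag_mat p ** diag_mat \<beta>) *v p) $ i
    = \<beta>$i*p$i - \<delta>$i*p$i - ((\<Sum>k\<in>UNIV - {i}. Q $ k $ i * x $ k / x $ i) * p $ i
      - (\<Sum>j\<in>UNIV - {i}. Q $ j $ i * x $ j / x $ i * p $ j)) - p$i*\<beta>$i*p$i"
    by (simp add: matrix_vector_mult_diff_rdistrib diag_mv diag_mm L_mv)
  then show ?thesis unfolding e by (simp add: algebra_simps)
qed

lemma xrhs: "(transpose Q *v x) $ i = (\<Sum>j\<in>UNIV. Q $ j $ i * x $ j)"
  by (simp add: matrix_vector_mult_def transpose_def)

lemma pos_of_eps: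
  fixes y c :: real
  assumes "c > 0" "\<forall>\<epsilon>>0. \<epsilon> \<le> d \<longrightarrow> y + \<epsilon> * c > 0" "d > 0"
  shows "y \<ge> 0"
proof (rule ccontr)
  assume "\<not> y \<ge> 0"
  define \<epsilon> where "\<epsilon> = min d (- y / c)"
  have "\<epsilon> > 0" using assms \<open>\<not> y \<ge> 0\<close> unfolding \<epsilon>_def by (auto simp: field_simps)
  then have "y + \<epsilon> * c > 0" using assms by (auto simp: \<epsilon>_def)
  moreover have "\<epsilon> * c \<le> - y" using assms unfolding \<epsilon>_def
    by (metis min.cobounded2 mult.commute mult_left_mono less_imp_le nonzero_mult_div_cancel_left
        order_less_irrefl times_divide_eq_right)
  ultimately show False by simp
qed

theorem lemma1:
  fixes Q :: "real^'n^'n" and \<beta> \<delta> :: "real^'n"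
    and p x :: "real \<Rightarrow> real^'n"
  assumes n2: "CARD('n) \<ge> 2"
    and gen: "generator_matrix Q"
    and irr: "irreducible_matrix Q"
    and beta_pos: "\<forall>i. \<beta> $ i > 0"
    and delta_nonneg: "\<forall>i. \<delta> $ i \<ge> 0"
    and p_ode: "\<forall>t\<ge>0. (p has_vector_derivative
                  ((diag_mat \<beta> - diag_mat \<delta> - L_mat Q (x t)) *v p t
                   - (diag_mat (p t) ** diag_mat \<beta>) *v p t)) (at t within {0..})"
    and x_ode: "\<forall>t\<ge>0. (x has_vector_derivative (transpose Q *v x t)) (at t within {0..})"
    and p0: "\<forall>i. 0 \<le> p 0 $ i \<and> p 0 $ i \<le> 1"
    and x0: "\<forall>i. 0 < x 0 $ i \<and> x 0 $ i < 1"
    and x0_sum: "(\<Sum>i\<in>UNIV. x 0 $ i) = 1"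
    and lim_i: "\<exists>i. ((\<lambda>t. p t $ i) \<longlongrightarrow> 0) at_top"
  shows "(p \<longlongrightarrow> 0) at_top"
proof -
  define xd where "xd i t = (\<Sum>j\<in>UNIV. Q $ j $ i * x t $ j)" for i t
  define pd where "pd i t = (\<beta>$i - \<delta>$i - \<beta>$i * p t$i) * p t$i
      + (\<Sum>j\<in>UNIV-{i}. Q$j$i * x t$j / x t$i * (p t$j - p t$i))" for i t
  have Dx: "\<forall>t\<ge>0. ((\<lambda>t. x t $ i) has_real_derivative xd i t) (at t within {0..})" for i
  proof (intro allI impI)
    fix t :: real assume "t \<ge> 0"
    from comp_deriv[OF x_ode[rule_format, OF this], of i]
    show "((\<lambda>t. x t $ i) has_real_derivative xd i t) (at t within {0..})"
      by (simp only: xrhs xd_def)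
  qed
  have Dp: "\<forall>t\<ge>0. ((\<lambda>t. p t $ i) has_real_derivative pd i t) (at t within {0..})" for i
  proof (intro allI impI)
    fix t :: real assume "t \<ge> 0"
    from comp_deriv[OF p_ode[rule_format, OF this], of i]
    show "((\<lambda>t. p t $ i) has_real_derivative pd i t) (at t within {0..})"
      by (simp only: rhs_comp pd_def)
  qed
  have qoff: "i \<noteq> j \<Longrightarrow> Q $ i $ j \<ge> 0" for i j using gen unfolding generator_matrix_def by auto
  have rowsum: "(\<Sum>j\<in>UNIV. Q $ k $ j) = 0" for k
  proof -
    have "(\<Sum>j\<in>UNIV. Q $ k $ j) = Q $ k $ k + (\<Sum>j\<in>UNIV-{k}. Q $ k $ j)" by (simp add: sum.remove)
    then show ?thesis using gen unfolding generator_matrix_def by auto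
  qed
  define colsum where "colsum i = (\<Sum>j\<in>UNIV. \<bar>Q $ j $ i\<bar>)" for i
  define a where "a = (\<Sum>i\<in>UNIV. colsum i)"
  have colsum_ge: "\<bar>Q $ j $ i\<bar> \<le> colsum i" for i j
    unfolding colsum_def by (rule member_le_sum) auto
  have colsum_nn: "colsum i \<ge> 0" for i unfolding colsum_def by (simp add: sum_nonneg)
  have a_ge: "colsum i \<le> a" for i unfolding a_def by (rule member_le_sum) (auto simp: colsum_nn)
  have a_nn: "a \<ge> 0" using a_ge colsum_nn by (meson order_trans)
  have xnn: "x t $ i \<ge> 0" if "t \<ge> 0" for t i
  proof -
    define L where "L = a + 1"
    have "x t $ i + \<epsilon> * exp (L * t) > 0" if "\<epsilon> > 0" for \<epsilon>
    proof -
      have fz: "\<forall>i s. 0 \<le> s \<longrightarrow> s \<le> t \<longrightarrow> x s $ i + \<epsilon> * exp (L * s) > 0"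
      proof (rule first_zero[where f = "\<lambda>i s. x s $ i + \<epsilon> * exp (L * s)" and f' = "\<lambda>i s. xd i s + \<epsilon> * (exp (L * s) * L)"])
        show "\<forall>i s. 0 \<le> s \<longrightarrow> ((\<lambda>s. x s $ i + \<epsilon> * exp (L * s)) has_real_derivative
              xd i s + \<epsilon> * (exp (L * s) * L)) (at s within {0..})"
          using Dx by (auto intro!: derivative_eq_intros)
        show "\<forall>i. 0 < x 0 $ i + \<epsilon> * exp (L * 0)" using x0 \<open>\<epsilon> > 0\<close> by (auto intro: add_pos_pos)
        show "\<forall>i s. 0 < s \<longrightarrow> s \<le> t \<longrightarrow> (\<forall>j. 0 \<le> x s $ j + \<epsilon> * exp (L * s)) \<longrightarrow>
            x s $ i + \<epsilon> * exp (L * s) = 0 \<longrightarrow> 0 < xd i s + \<epsilon> * (exp (L * s) * L)"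
        proof (intro allI impI)
          fix i s assume s: "0 < s" "s \<le> t" and nj: "\<forall>j. 0 \<le> x s $ j + \<epsilon> * exp (L * s)"
            and zi: "x s $ i + \<epsilon> * exp (L * s) = 0"
          define e where "e = \<epsilon> * exp (L * s)"
          have e0: "e > 0" using \<open>\<epsilon> > 0\<close> by (simp add: e_def)
          have trm: "Q $ j $ i * x s $ j \<ge> - (\<bar>Q $ j $ i\<bar> * e)" for j
          proof (cases "j = i")
            case True then show ?thesis using zi e0 by (simp add: e_def) (smt (verit) mult_minus_right abs_ge_self mult_right_mono)
          next
            case False
            then have "Q $ j $ i \<ge> 0" using qoff by auto
            moreover have "x s $ j \<ge> - e" using nj by (auto simp: e_def) (smt (verit) nj)
            ultimately show ?thesis by (smt (verit) mult_left_mono mult_minus_right)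
          qed
          have "xd i s \<ge> (\<Sum>j\<in>UNIV. - (\<bar>Q $ j $ i\<bar> * e))" unfolding xd_def by (rule sum_mono) (rule trm)
          also have "(\<Sum>j\<in>UNIV. - (\<bar>Q $ j $ i\<bar> * e)) = - (colsum i * e)"
            by (simp add: colsum_def sum_negf sum_distrib_right)
          finally have "xd i s \<ge> - (a * e)" using a_ge[of i] e0
            by (smt (verit) mult_right_mono)
          then show "0 < xd i s + \<epsilon> * (exp (L * s) * L)" using e0 unfolding L_def e_def
            by (simp add: algebra_simps)
        qed
      qed
      then show ?thesis using that \<open>t \<ge> 0\<close> by auto
    qed
    then show ?thesis by (intro pos_of_eps[where c = "exp (L * t)" and d = 1]) auto
  qed
  define g where "g i t = exp (a * t) * x t $ i" for i t
  define gd where "gd i t = exp (a * t) * (xd i t + a * x t $ i)" for i t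
  have Dg: "\<forall>t\<ge>0. ((g i) has_real_derivative gd i t) (at t within {0..})" for i
    using Dx[of i] unfolding g_def gd_def
    by (auto intro!: derivative_eq_intros simp: algebra_simps)
  have gd_ge: "gd i t \<ge> exp (a * t) * (Q $ k $ i * x t $ k)" if "t \<ge> 0" "k \<noteq> i" for i k t
  proof -
    have "xd i t = Q $ i $ i * x t $ i + (\<Sum>j\<in>UNIV-{i}. Q $ j $ i * x t $ j)"
      unfolding xd_def by (simp add: sum.remove)
    moreover have "(\<Sum>j\<in>UNIV-{i}. Q $ j $ i * x t $ j) \<ge> Q $ k $ i * x t $ k"
      by (rule member_le_sum) (use that qoff xnn in auto)
    moreover have "(Q $ i $ i + a) * x t $ i \<ge> 0"
      using colsum_ge[of i i] a_ge[of i] xnn[OF that(1)] by (intro mult_nonneg_nonneg) auto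
    ultimately have "xd i t + a * x t $ i \<ge> Q $ k $ i * x t $ k" by (simp add: algebra_simps)
    then show ?thesis unfolding gd_def by (intro mult_left_mono) auto
  qed
  have gd_nn: "gd i t \<ge> 0" if "t \<ge> 0" for i t
  proof -
    have "\<exists>k::'n. k \<noteq> i"
    proof (rule ccontr)
      assume "\<not> (\<exists>k::'n. k \<noteq> i)"
      then have "(UNIV::'n set) = {i}" by auto
      then have "card (UNIV::'n set) = card {i}" by (rule arg_cong)
      then show False using n2 by simp
    qed
    then obtain k :: 'n where "k \<noteq> i" by blast
    have "Q $ k $ i * x t $ k \<ge> 0" using qoff[OF \<open>k \<noteq> i\<close>] xnn[OF that] by simp
    moreover have "exp (a * t) > 0" by simp
    ultimately have "exp (a * t) * (Q $ k $ i * x t $ k) \<ge> 0" by simp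
    then show ?thesis using gd_ge[OF that \<open>k \<noteq> i\<close>] by linarith
  qed
  have g_mono: "g i s \<le> g i t" if "0 \<le> s" "s \<le> t" for i s t
    using mvt_ge[OF Dg that, of 0] gd_nn that by auto
  have xpos: "x t $ i > 0" if "t \<ge> 0" for t i
  proof -
    have "g i t \<ge> g i 0" using g_mono that by auto
    then have "exp (a * t) * x t $ i > 0" using x0 by (auto simp: g_def) (smt (verit))
    then show ?thesis by (simp add: zero_less_mult_iff)
  qed
  have g_nn: "g i t \<ge> 0" if "t \<ge> 0" for i t using xnn[OF that] by (simp add: g_def)
  have g_edge: "g i (t + 1) \<ge> Q $ k $ i * g k t" if "t \<ge> 0" "k \<noteq> i" for i k t
  proof -
    have "Q $ k $ i * g k t * ((t+1) - t) \<le> g i (t+1) - g i t"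
    proof (rule mvt_ge[OF Dg that(1)], simp, intro allI impI)
      fix s assume s: "t < s \<and> s < t + 1"
      have "Q $ k $ i * g k t \<le> Q $ k $ i * g k s"
        using g_mono[of t s k] that s qoff[OF that(2)] by (intro mult_left_mono) auto
      also have "\<dots> = exp (a * s) * (Q $ k $ i * x s $ k)" by (simp add: g_def)
      also have "\<dots> \<le> gd i s" using gd_ge[of s k i] that s by auto
      finally show "Q $ k $ i * g k t \<le> gd i s" .
    qed
    then show ?thesis using g_nn[OF that(1), of i] by simp
  qed
  define E where "E = {(a, b). a \<noteq> b \<and> Q $ a $ b \<noteq> 0}"
  have path: "\<exists>m::nat. \<exists>c>0. \<forall>t\<ge>0. c * g k t \<le> g i (t + real m)" if "(k, i) \<in> E\<^sup>+" for k i
    using that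
  proof (induction rule: trancl_induct)
    case (base y)
    then have "Q $ k $ y > 0" using qoff[of k y] unfolding E_def by auto
    then show ?case using g_edge[of _ k y] base unfolding E_def
      by (intro exI[of _ 1] exI[of _ "Q $ k $ y"]) (auto simp: mult.commute)
  next
    case (step y z)
    then obtain m c where mc: "c > 0" "\<forall>t\<ge>0. c * g k t \<le> g y (t + real m)" by blast
    have yz: "y \<noteq> z" "Q $ y $ z > 0" using step qoff[of y z] unfolding E_def by auto
    have "Q $ y $ z * c * g k t \<le> g z (t + real (Suc m))" if "t \<ge> 0" for t
    proof -
      have "Q $ y $ z * c * g k t \<le> Q $ y $ z * g y (t + real m)"
        using mc that yz by (simp add: mult.assoc mult_left_mono)
      also have "\<dots> \<le> g z (t + real m + 1)" using g_edge[of "t + real m" y z] that yz by auto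
      finally have "Q $ y $ z * c * g k t \<le> g z (t + real m + 1)" .
      moreover have "t + real m + 1 = t + real (Suc m)" by simp
      ultimately show ?thesis by metis
    qed
    then show ?case using mc yz by (intro exI[of _ "Suc m"] exI[of _ "Q $ y $ z * c"]) auto
  qed
  have path2: "\<forall>ki::'n \<times> 'n. \<exists>m::nat. \<exists>c>0. \<forall>t\<ge>0. c * g (fst ki) t \<le> g (snd ki) (t + real m)"
  proof
    fix ki :: "'n \<times> 'n"
    show "\<exists>m::nat. \<exists>c>0. \<forall>t\<ge>0. c * g (fst ki) t \<le> g (snd ki) (t + real m)"
    proof (cases "fst ki = snd ki")
      case True then show ?thesis by (intro exI[of _ 0] exI[of _ 1]) auto
    next
      case False
      then have "(fst ki, snd ki) \<in> E\<^sup>+" using irr unfolding irreducible_matrix_def E_def by blast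
      then show ?thesis by (rule path)
    qed
  qed
  obtain mf where h1: "\<forall>ki. \<exists>c>0. \<forall>t\<ge>0. c * g (fst ki) t \<le> g (snd ki) (t + real (mf ki))"
    using choice[OF path2] by blast
  obtain cf where mfcf: "\<forall>ki. cf ki > 0 \<and> (\<forall>t\<ge>0. cf ki * g (fst ki) t \<le> g (snd ki) (t + real (mf ki)))"
    using choice[OF h1] by blast
  define M where "M = real (Max (range mf))"
  define C where "C = Min (range cf)"
  have C0: "C > 0" unfolding C_def using mfcf by (subst Min_gr_iff) auto
  have M0: "M \<ge> 0" unfolding M_def by simp
  have unif: "C * g k t \<le> g i (t + M)" if "t \<ge> 0" for k i t
  proof -
    have "C * g k t \<le> cf (k, i) * g k t" unfolding C_def
      by (intro mult_right_mono Min_le g_nn that) auto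
    also have "\<dots> \<le> g i (t + real (mf (k, i)))" using mfcf that by force
    also have "\<dots> \<le> g i (t + M)" unfolding M_def
      by (intro g_mono) (use that in auto)
    finally show ?thesis .
  qed
  have xsum: "(\<Sum>i\<in>UNIV. x t $ i) = 1" if "t \<ge> 0" for t
  proof -
    have DS: "\<forall>t\<ge>0. ((\<lambda>t. \<Sum>i\<in>UNIV. x t $ i) has_real_derivative (\<Sum>i\<in>UNIV. xd i t)) (at t within {0..})"
      using Dx by (auto intro!: DERIV_sum)
    have z: "(\<Sum>i\<in>UNIV. xd i s) = 0" for s
    proof -
      have "(\<Sum>i\<in>UNIV. xd i s) = (\<Sum>j\<in>UNIV. x s $ j * (\<Sum>i\<in>UNIV. Q $ j $ i))"
        unfolding xd_def by (subst sum.swap) (simp add: sum_distrib_left mult.commute)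
      then show ?thesis by (simp add: rowsum)
    qed
    have "0 * (t - 0) \<le> (\<Sum>i\<in>UNIV. x t $ i) - (\<Sum>i\<in>UNIV. x 0 $ i)"
      by (rule mvt_ge[OF DS]) (use that z in auto)
    moreover have "(\<Sum>i\<in>UNIV. x t $ i) - (\<Sum>i\<in>UNIV. x 0 $ i) \<le> 0 * (t - 0)"
      by (rule mvt_le[OF DS]) (use that z in auto)
    ultimately show ?thesis using x0_sum by simp
  qed
  have xle1: "x t $ i \<le> 1" if "t \<ge> 0" for t i
    using member_le_sum[of i UNIV "\<lambda>i. x t $ i"] xnn[OF that] xsum[OF that] by auto
  define x0min where "x0min = Min (range (\<lambda>i. x 0 $ i))"
  have x0min_pos: "x0min > 0" unfolding x0min_def using x0 by (subst Min_gr_iff) auto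
  have x0min_le: "x0min \<le> x 0 $ i" for i unfolding x0min_def by (rule Min_le) auto
  define c0 where "c0 = min (C * exp (- (a * M)) / real CARD('n)) (exp (- (a * M)) * x0min)"
  have c0_pos: "c0 > 0" unfolding c0_def using C0 x0min_pos by simp
  have xlow: "x t $ i \<ge> c0" if "t \<ge> 0" for t i
  proof (cases "t \<le> M")
    case True
    have "g i 0 \<le> g i t" using g_mono that by auto
    then have "x 0 $ i \<le> exp (a * t) * x t $ i" by (simp add: g_def)
    then have "exp (- (a * t)) * x 0 $ i \<le> x t $ i"
      by (simp add: exp_minus field_simps)
    moreover have "exp (- (a * M)) * x0min \<le> exp (- (a * t)) * x 0 $ i"
      using True a_nn x0min_le[of i] x0min_pos
      by (intro mult_mono) (auto intro: mult_left_mono)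
    ultimately show ?thesis unfolding c0_def by linarith
  next
    case False
    define s where "s = t - M"
    have s0: "s \<ge> 0" using False unfolding s_def by simp
    have "C * exp (- (a * M)) * x s $ k \<le> x t $ i" for k
    proof -
      have sM: "s + M = t" by (simp add: s_def)
      have "C * g k s \<le> g i (s + M)" by (rule unif[OF s0])
      then have "C * g k s \<le> g i t" by (simp only: sM)
      moreover have "exp (a * t) = exp (a * s) * exp (a * M)"
        by (simp add: sM[symmetric] distrib_left exp_add)
      ultimately have "C * (exp (a * s) * x s $ k) \<le> exp (a * s) * exp (a * M) * x t $ i"
        unfolding g_def by simp
      then have "exp (a * s) * (C * x s $ k) \<le> exp (a * s) * (exp (a * M) * x t $ i)"
        by (simp add: algebra_simps)
      then have "C * x s $ k \<le> exp (a * M) * x t $ i" by simp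
      then show ?thesis by (simp add: exp_minus field_simps)
    qed
    then have "(\<Sum>k\<in>UNIV. C * exp (- (a * M)) * x s $ k) \<le> (\<Sum>k\<in>(UNIV::'n set). x t $ i)"
      by (intro sum_mono) auto
    then have "C * exp (- (a * M)) \<le> real CARD('n) * x t $ i"
      using xsum[OF s0] by (simp add: sum_distrib_left[symmetric])
    then have "C * exp (- (a * M)) / real CARD('n) \<le> x t $ i"
      by (simp add: field_simps)
    then show ?thesis unfolding c0_def by linarith
  qed
  have mnn: "Q $ j $ i * x s $ j / x s $ i * w \<ge> 0" if "s \<ge> 0" "j \<noteq> i" "w \<ge> 0" for s i j w
    using qoff[OF that(2)] xpos[OF that(1)] that(3) by (simp add: less_imp_le)
  define Bs where "Bs = (\<Sum>i\<in>UNIV. \<beta> $ i)"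
  have Bs_ge: "\<beta> $ i \<le> Bs" for i unfolding Bs_def
    by (rule member_le_sum) (use beta_pos in \<open>auto intro: less_imp_le\<close>)
  have pnn: "p t $ i \<ge> 0" if "t \<ge> 0" for t i
  proof -
    define L where "L = 2 * Bs + 1"
    have L0: "L > 0" unfolding L_def using Bs_ge[of i] beta_pos[rule_format, of i] by linarith
    have "p t $ i + \<epsilon> * exp (L * t) > 0" if "\<epsilon> > 0" "\<epsilon> \<le> exp (- (L * t))" for \<epsilon>
    proof -
      have fz: "\<forall>i s. 0 \<le> s \<longrightarrow> s \<le> t \<longrightarrow> p s $ i + \<epsilon> * exp (L * s) > 0"
      proof (rule first_zero[where f = "\<lambda>i s. p s $ i + \<epsilon> * exp (L * s)" and f' = "\<lambda>i s. pd i s + \<epsilon> * (exp (L * s) * L)"])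
        show "\<forall>i s. 0 \<le> s \<longrightarrow> ((\<lambda>s. p s $ i + \<epsilon> * exp (L * s)) has_real_derivative
              pd i s + \<epsilon> * (exp (L * s) * L)) (at s within {0..})"
          using Dp by (auto intro!: derivative_eq_intros)
        show "\<forall>i. 0 < p 0 $ i + \<epsilon> * exp (L * 0)" using p0 \<open>\<epsilon> > 0\<close> by (auto intro: add_nonneg_pos)
        show "\<forall>i s. 0 < s \<longrightarrow> s \<le> t \<longrightarrow> (\<forall>j. 0 \<le> p s $ j + \<epsilon> * exp (L * s)) \<longrightarrow>
            p s $ i + \<epsilon> * exp (L * s) = 0 \<longrightarrow> 0 < pd i s + \<epsilon> * (exp (L * s) * L)"
        proof (intro allI impI)
          fix i s assume s: "0 < s" "s \<le> t" and nj: "\<forall>j. 0 \<le> p s $ j + \<epsilon> * exp (L * s)"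
            and zi: "p s $ i + \<epsilon> * exp (L * s) = 0"
          define e where "e = \<epsilon> * exp (L * s)"
          have e0: "e > 0" using \<open>\<epsilon> > 0\<close> by (simp add: e_def)
          have "e \<le> exp (- (L * t)) * exp (L * s)" unfolding e_def using that by (intro mult_right_mono) auto
          also have "\<dots> = exp (L * (s - t))" by (simp add: exp_add[symmetric] algebra_simps)
          also have "\<dots> \<le> 1" using s L0 by (simp add: mult_nonneg_nonpos)
          finally have e1: "e \<le> 1" .
          have pi: "p s $ i = - e" using zi by (simp add: e_def)
          have sum0: "(\<Sum>j\<in>UNIV-{i}. Q$j$i * x s$j / x s$i * (p s$j - p s$i)) \<ge> 0"
          proof (rule sum_nonneg)
            fix j assume "j \<in> UNIV - {i}"
            moreover have "p s $ j - p s $ i \<ge> 0" using nj[rule_format, of j] pi by (simp add: e_def)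
            ultimately show "Q$j$i * x s$j / x s$i * (p s$j - p s$i) \<ge> 0" using mnn s by auto
          qed
          have id: "(\<beta>$i - \<delta>$i - \<beta>$i * p s$i) * p s$i + 2 * \<beta>$i * e = \<beta>$i * e * (1 - e) + \<delta>$i * e"
            unfolding pi by (simp add: algebra_simps)
          have "\<beta>$i * e * (1 - e) \<ge> 0" using beta_pos[rule_format, of i] e0 e1
            by (intro mult_nonneg_nonneg) auto
          moreover have "\<delta>$i * e \<ge> 0" using delta_nonneg[rule_format, of i] e0 by simp
          ultimately have "(\<beta>$i - \<delta>$i - \<beta>$i * p s$i) * p s$i \<ge> - 2 * \<beta>$i * e" using id by linarith
          then have "pd i s \<ge> - 2 * \<beta>$i * e" using sum0 unfolding pd_def by linarith
          moreover have "2 * \<beta>$i * e \<le> 2 * Bs * e" using Bs_ge[of i] e0 by simp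
          moreover have "\<epsilon> * (exp (L * s) * L) = 2 * Bs * e + e"
            unfolding e_def L_def by (simp add: algebra_simps)
          ultimately show "0 < pd i s + \<epsilon> * (exp (L * s) * L)" using e0 by linarith
        qed
      qed
      then show ?thesis using \<open>t \<ge> 0\<close> by auto
    qed
    then show ?thesis by (intro pos_of_eps[where c = "exp (L * t)" and d = "exp (- (L * t))"]) auto
  qed
  have ple1: "p t $ i \<le> 1" if "t \<ge> 0" for t i
  proof -
    have "1 - p t $ i + \<epsilon> * exp t > 0" if "\<epsilon> > 0" for \<epsilon>
    proof -
      have fz: "\<forall>i s. 0 \<le> s \<longrightarrow> s \<le> t \<longrightarrow> 1 - p s $ i + \<epsilon> * exp s > 0"
      proof (rule first_zero[where f = "\<lambda>i s. 1 - p s $ i + \<epsilon> * exp s" and f' = "\<lambda>i s. - pd i s + \<epsilon> * exp s"])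
        show "\<forall>i s. 0 \<le> s \<longrightarrow> ((\<lambda>s. 1 - p s $ i + \<epsilon> * exp s) has_real_derivative
              - pd i s + \<epsilon> * exp s) (at s within {0..})"
          using Dp by (auto intro!: derivative_eq_intros)
        show "\<forall>i. 0 < 1 - p 0 $ i + \<epsilon> * exp 0" using p0 \<open>\<epsilon> > 0\<close> by (auto intro: add_nonneg_pos)
        show "\<forall>i s. 0 < s \<longrightarrow> s \<le> t \<longrightarrow> (\<forall>j. 0 \<le> 1 - p s $ j + \<epsilon> * exp s) \<longrightarrow>
            1 - p s $ i + \<epsilon> * exp s = 0 \<longrightarrow> 0 < - pd i s + \<epsilon> * exp s"
        proof (intro allI impI)
          fix i s assume s: "0 < s" "s \<le> t" and nj: "\<forall>j. 0 \<le> 1 - p s $ j + \<epsilon> * exp s"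
            and zi: "1 - p s $ i + \<epsilon> * exp s = 0"
          define e where "e = \<epsilon> * exp s"
          have e0: "e > 0" using \<open>\<epsilon> > 0\<close> by (simp add: e_def)
          have pi: "p s $ i = 1 + e" using zi by (simp add: e_def)
          have sum0: "(\<Sum>j\<in>UNIV-{i}. Q$j$i * x s$j / x s$i * (p s$j - p s$i)) \<le> 0"
          proof (rule sum_nonpos)
            fix j assume j: "j \<in> UNIV - {i}"
            have "p s $ i - p s $ j \<ge> 0" using nj[rule_format, of j] pi by (simp add: e_def)
            then have "Q$j$i * x s$j / x s$i * (p s$i - p s$j) \<ge> 0" using mnn s j by auto
            moreover have "Q$j$i * x s$j / x s$i * (p s$j - p s$i) = - (Q$j$i * x s$j / x s$i * (p s$i - p s$j))"
              by (simp add: right_diff_distrib)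
            ultimately show "Q$j$i * x s$j / x s$i * (p s$j - p s$i) \<le> 0" by linarith
          qed
          have "(\<beta>$i - \<delta>$i - \<beta>$i * p s$i) * p s$i = - ((\<delta>$i + \<beta>$i * e) * (1 + e))"
            unfolding pi by (simp add: algebra_simps)
          moreover have "(\<delta>$i + \<beta>$i * e) * (1 + e) \<ge> 0"
            using delta_nonneg[rule_format, of i] beta_pos[rule_format, of i] e0 by (intro mult_nonneg_nonneg add_nonneg_nonneg) auto
          ultimately have "pd i s \<le> 0" using sum0 unfolding pd_def by linarith
          then show "0 < - pd i s + \<epsilon> * exp s" using e0 unfolding e_def by simp
        qed
      qed
      then show ?thesis using \<open>t \<ge> 0\<close> by auto
    qed
    then have "1 - p t $ i \<ge> 0" by (intro pos_of_eps[where c = "exp t" and d = 1]) auto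
    then show ?thesis by simp
  qed
  have mnn2: "Q $ j $ i * x t $ j / x t $ i \<ge> 0" if "t \<ge> 0" "j \<noteq> i" for t i j
    using mnn[OF that, of 1] by simp
  have mup: "Q $ j $ i * x t $ j / x t $ i \<le> \<bar>Q $ j $ i\<bar> / c0" if "t \<ge> 0" "j \<noteq> i" for t i j
  proof -
    have q: "Q $ j $ i \<ge> 0" using qoff that by auto
    have "Q $ j $ i * x t $ j \<le> Q $ j $ i" using q xle1[OF that(1), of j] by (simp add: mult_left_le)
    then have "Q $ j $ i * x t $ j / x t $ i \<le> Q $ j $ i / x t $ i"
      using xpos[OF that(1), of i] by (simp add: divide_right_mono)
    also have "\<dots> \<le> Q $ j $ i / c0"
      using q c0_pos xlow[OF that(1), of i] by (intro divide_left_mono) auto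
    finally show ?thesis using q by simp
  qed
  have mlow: "Q $ k $ i * x t $ k / x t $ i \<ge> Q $ k $ i * c0" if "t \<ge> 0" "Q $ k $ i > 0" for t i k
  proof -
    have xi: "0 < x t $ i" "x t $ i \<le> 1" using xpos xle1 that by auto
    have "x t $ k * x t $ i \<le> x t $ k" using xi xnn[OF that(1), of k] by (simp add: mult_left_le)
    then have "x t $ k \<le> x t $ k / x t $ i" using xi by (simp add: le_divide_eq)
    then have "c0 \<le> x t $ k / x t $ i" using xlow[OF that(1), of k] by linarith
    then have "Q $ k $ i * c0 \<le> Q $ k $ i * (x t $ k / x t $ i)" using that by (intro mult_left_mono) auto
    then show ?thesis by simp
  qed
  have msum: "(\<Sum>j\<in>UNIV-{i}. Q $ j $ i * x t $ j / x t $ i) \<le> colsum i / c0" if "t \<ge> 0" for t i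
  proof -
    have "(\<Sum>j\<in>UNIV-{i}. Q $ j $ i * x t $ j / x t $ i) \<le> (\<Sum>j\<in>UNIV-{i}. \<bar>Q $ j $ i\<bar> / c0)"
      by (rule sum_mono) (use mup that in auto)
    also have "\<dots> \<le> (\<Sum>j\<in>UNIV. \<bar>Q $ j $ i\<bar> / c0)"
      by (rule sum_mono2) (use c0_pos in auto)
    finally show ?thesis by (simp add: colsum_def sum_divide_distrib)
  qed
  have pd_up: "pd k t \<le> \<beta> $ k + colsum k / c0" if "t \<ge> 0" for k t
  proof -
    have p: "0 \<le> p t $ k" "p t $ k \<le> 1" using pnn ple1 that by auto
    have "(\<beta>$k - \<delta>$k - \<beta>$k * p t$k) * p t$k = \<beta>$k * p t$k - \<delta>$k * p t$k - \<beta>$k * (p t$k * p t$k)"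
      by (simp add: algebra_simps)
    moreover have "\<delta>$k * p t$k \<ge> 0" using delta_nonneg p by simp
    moreover have "\<beta>$k * (p t$k * p t$k) \<ge> 0" using beta_pos[rule_format, of k] p by simp
    moreover have "\<beta>$k * p t$k \<le> \<beta>$k" using beta_pos[rule_format, of k] p by (simp add: mult_left_le)
    ultimately have A: "(\<beta>$k - \<delta>$k - \<beta>$k * p t$k) * p t$k \<le> \<beta>$k" by linarith
    have "(\<Sum>j\<in>UNIV-{k}. Q$j$k * x t$j / x t$k * (p t$j - p t$k)) \<le> (\<Sum>j\<in>UNIV-{k}. Q$j$k * x t$j / x t$k)"
    proof (rule sum_mono)
      fix j assume j: "j \<in> UNIV - {k}"
      have le1: "p t $ j - p t $ k \<le> 1" using pnn[OF that, of k] ple1[OF that, of j] by linarith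
      have "j \<noteq> k" using j by simp
      from mult_left_le[OF le1 mnn2[OF that this]]
      show "Q$j$k * x t$j / x t$k * (p t$j - p t$k) \<le> Q$j$k * x t$j / x t$k" .
    qed
    also have "\<dots> \<le> colsum k / c0" by (rule msum[OF that])
    finally show ?thesis using A unfolding pd_def by linarith
  qed
  have pd_low: "pd i t \<ge> - ((\<delta> $ i + colsum i / c0) * p t $ i) + Q $ k $ i * c0 * p t $ k"
    if "t \<ge> 0" "k \<noteq> i" "Q $ k $ i > 0" for i k t
  proof -
    have p: "0 \<le> p t $ i" "p t $ i \<le> 1" using pnn ple1 that by auto
    have "(\<beta>$i - \<delta>$i - \<beta>$i * p t$i) * p t$i = \<beta>$i * p t$i * (1 - p t$i) - \<delta>$i * p t$i"
      by (simp add: algebra_simps)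
    moreover have "\<beta>$i * p t$i * (1 - p t$i) \<ge> 0" using beta_pos[rule_format, of i] p by simp
    ultimately have A: "(\<beta>$i - \<delta>$i - \<beta>$i * p t$i) * p t$i \<ge> - (\<delta>$i * p t$i)" by linarith
    have "(\<Sum>j\<in>UNIV-{i}. Q$j$i * x t$j / x t$i * (p t$j - p t$i))
        = (\<Sum>j\<in>UNIV-{i}. Q$j$i * x t$j / x t$i * p t$j) - (\<Sum>j\<in>UNIV-{i}. Q$j$i * x t$j / x t$i) * p t$i"
      by (simp add: sum_subtractf[symmetric] sum_distrib_right right_diff_distrib)
    moreover have "(\<Sum>j\<in>UNIV-{i}. Q$j$i * x t$j / x t$i * p t$j) \<ge> Q$k$i * x t$k / x t$i * p t$k"
      by (rule member_le_sum) (use that mnn pnn in auto)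
    moreover have "Q$k$i * x t$k / x t$i * p t$k \<ge> Q $ k $ i * c0 * p t $ k"
      using mult_right_mono[OF mlow[OF that(1) that(3)] pnn[OF that(1), of k]] .
    moreover have "(\<Sum>j\<in>UNIV-{i}. Q$j$i * x t$j / x t$i) * p t$i \<le> colsum i / c0 * p t$i"
      using mult_right_mono[OF msum[OF that(1), of i] p(1)] .
    ultimately show ?thesis using A unfolding pd_def by (simp add: algebra_simps)
  qed
  have edge: "((\<lambda>t. p t $ k) \<longlongrightarrow> 0) at_top"
    if lim: "((\<lambda>t. p t $ i) \<longlongrightarrow> 0) at_top" and ki: "k \<noteq> i" "Q $ k $ i > 0" for k i
  proof -
    define \<gamma> where "\<gamma> = Q $ k $ i * c0"
    define A where "A = \<delta> $ i + colsum i / c0"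
    define B where "B = \<beta> $ k + colsum k / c0 + 1"
    have \<gamma>0: "\<gamma> > 0" using ki c0_pos unfolding \<gamma>_def by simp
    have A0: "A \<ge> 0" using delta_nonneg colsum_nn c0_pos unfolding A_def by (simp add: add_nonneg_nonneg)
    have B0: "B > 0" using beta_pos colsum_nn c0_pos unfolding B_def
      by (smt (verit) divide_nonneg_pos)
    show ?thesis unfolding tendsto_iff
    proof (intro allI impI)
      fix \<epsilon> :: real assume \<epsilon>: "\<epsilon> > 0"
      define h where "h = \<epsilon> / (2 * B)"
      have h0: "h > 0" using \<epsilon> B0 by (simp add: h_def)
      define \<eta> where "\<eta> = h * \<gamma> * \<epsilon> / (4 * (1 + h * A))"
      have \<eta>0: "\<eta> > 0" using h0 \<gamma>0 \<epsilon> A0 unfolding \<eta>_def by (simp add: add_pos_nonneg)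
      have "\<forall>\<^sub>F t in at_top. dist (p t $ i) 0 < \<eta>" using lim \<eta>0 unfolding tendsto_iff by blast
      then obtain T1 where T1: "\<And>t. t \<ge> T1 \<Longrightarrow> dist (p t $ i) 0 < \<eta>"
        unfolding eventually_at_top_linorder by blast
      have small: "p t $ k < \<epsilon>" if t: "t \<ge> max T1 0 + h + 1" for t
      proof (rule ccontr)
        assume "\<not> p t $ k < \<epsilon>"
        then have pk: "p t $ k \<ge> \<epsilon>" by simp
        define s0 where "s0 = t - h"
        have s0: "s0 \<ge> T1" "s0 \<ge> 1" using t unfolding s0_def by auto
        have pi_small: "p s $ i < \<eta>" if "s \<ge> T1" for s using T1[OF that] by simp
        have pk_big: "p s $ k \<ge> \<epsilon> / 2" if s: "s0 < s" "s < t" for s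
        proof -
          have "p t $ k - p s $ k \<le> B * (t - s)"
          proof (rule mvt_le[OF Dp], use s s0 in simp, use s in simp, intro allI impI)
            fix r assume r: "s < r \<and> r < t"
            then have "r \<ge> 0" using s s0 by simp
            from pd_up[OF this, of k] show "pd k r \<le> B" unfolding B_def by simp
          qed
          moreover have "B * (t - s) \<le> B * h" using s B0 unfolding s0_def by simp
          moreover have "B * h = \<epsilon> / 2" unfolding h_def using B0 by simp
          ultimately show ?thesis using pk by linarith
        qed
        have mv: "(\<gamma> * (\<epsilon> / 2) - A * \<eta>) * (t - s0) \<le> p t $ i - p s0 $ i"
        proof (rule mvt_ge[OF Dp], use s0 in simp, simp add: s0_def h0[THEN less_imp_le], intro allI impI)
          fix s assume s: "s0 < s \<and> s < t"
          have sT: "s \<ge> 0" "s \<ge> T1" using s s0 by auto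
          have "pd i s \<ge> - (A * p s $ i) + \<gamma> * p s $ k"
            using pd_low[OF sT(1) ki] unfolding A_def \<gamma>_def .
          moreover have "A * p s $ i \<le> A * \<eta>" using pi_small[OF sT(2)] A0 by (simp add: mult_left_mono)
          moreover have "\<gamma> * p s $ k \<ge> \<gamma> * (\<epsilon> / 2)" using pk_big[of s] s \<gamma>0 by simp
          ultimately show "\<gamma> * (\<epsilon> / 2) - A * \<eta> \<le> pd i s" by linarith
        qed
        have "t - s0 = h" unfolding s0_def by simp
        then have mv2: "(\<gamma> * (\<epsilon> / 2) - A * \<eta>) * h \<le> p t $ i - p s0 $ i" using mv by simp
        have "p t $ i < \<eta>"
          using pi_small[of t] t h0 max.cobounded1[of T1 0] by linarith
        moreover have "p s0 $ i \<ge> 0" using pnn s0 by simp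
        ultimately have "(\<gamma> * (\<epsilon> / 2) - A * \<eta>) * h < \<eta>" using mv2 by linarith
        then have "h * \<gamma> * \<epsilon> / 2 < \<eta> * (1 + h * A)" by (simp add: algebra_simps)
        moreover have "\<eta> * (1 + h * A) = h * \<gamma> * \<epsilon> / 4"
        proof -
          have D0: "1 + h * A \<noteq> 0" using h0 A0 by (smt (verit) mult_nonneg_nonneg)
          have "\<eta> * (1 + h * A) = h * \<gamma> * \<epsilon> * ((1 + h * A) / (4 * (1 + h * A)))"
            unfolding \<eta>_def by simp
          also have "(1 + h * A) / (4 * (1 + h * A)) = 1 / 4" using D0 by simp
          finally show ?thesis by simp
        qed
        ultimately show False using h0 \<gamma>0 \<epsilon> by simp
      qed
      show "\<forall>\<^sub>F t in at_top. dist (p t $ k) 0 < \<epsilon>"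
        unfolding eventually_at_top_linorder
      proof (intro exI[of _ "max T1 0 + h + 1"] allI impI)
        fix n assume n: "max T1 0 + h + 1 \<le> n"
        then have "n \<ge> 0" using h0 max.cobounded2[of 0 T1] by linarith
        then show "dist (p n $ k) 0 < \<epsilon>" using pnn[of n k] small[OF n] by simp
      qed
    qed
  qed
  obtain i0 where i0: "((\<lambda>t. p t $ i0) \<longlongrightarrow> 0) at_top" using lim_i by blast
  define E where "E = {(a, b). a \<noteq> b \<and> Q $ a $ b \<noteq> 0}"
  have all: "((\<lambda>t. p t $ k) \<longlongrightarrow> 0) at_top" for k
  proof (cases "k = i0")
    case True then show ?thesis using i0 by simp
  next
    case False
    then have "(k, i0) \<in> E\<^sup>+" using irr unfolding irreducible_matrix_def E_def by blast
    then show ?thesis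
    proof (induction rule: converse_trancl_induct)
      case (base y)
      then have "y \<noteq> i0" "Q $ y $ i0 > 0" using qoff[of y i0] unfolding E_def by auto
      then show ?case using edge[OF i0] by blast
    next
      case (step y z)
      then have "y \<noteq> z" "Q $ y $ z > 0" using qoff[of y z] unfolding E_def by auto
      then show ?case using edge[OF step.IH] by blast
    qed
  qed
  show ?thesis by (rule vec_tendstoI) (use all in simp)
qed

end
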